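(* Fix $\delta>0$, $\epsilon>0$, and an integer $L\geq 2$. A learner strategy $\phi\in\Phi_N$ is $(\epsilon,\delta,L)$-secure if and only if it is $(\epsilon,\delta,L)$-private.
   Context: Setting: a learner wants to determine a true value $v^*\in[0,1)$. At step $k$ she submits a query $q_k\in[0,1)$ and receives the response $r_k=\mathbb{I}(v^*\geq q_k)$. A learner strategy $\phi$ of length $N$ uses a random seed $Y$, uniform on $\{1,2,\dots,\mathcal{Y}\}$, and consists of query functions $q_1=\phi_1(Y)$ and $q_k=\phi_k(r_1,\dots,r_{k-1},Y)$ for $k=2,\dots,N$, together with an estimation function $\hat{x}=\phi^E(r_1,\dots,r_N,Y)$. $\Phi_N$ denotes the set of all learner strategies of length $N$. An adversary observes the queries (but not the responses) and knows the strategy $\phi$, including the distribution of $Y$. For $x\in[0,1)$, $\mathcal{Q}(x)$ is the set of query sequences $\overline{q}\in[0,1)^N$ that occur with positive probability (over $Y$) when $v^*=x$, and $\mathcal{Q}=\bigcup_{x\in[0,1)}\mathcal{Q}(x)$. The adversary's information set is $\mathcal{I}(\overline{q})=\{x\in[0,1):\overline{q}\in\mathcal{Q}(x)\}$. A collection of $L$ closed intervals $[a_1,b_1],\dots,[a_L,b_L]$ with $b_j-a_j\leq\delta$ for all $j$ and whose union contains a set $\mathcal{E}\subset\mathbb{R}$ is a $(\delta,L)$ cover of $\mathcal{E}$; $\mathcal{E}$ is $(\delta,L)$-coverable if such a cover exists, and the $\delta$-cover number is $C_\delta(\mathcal{E})=\min\{L\in\mathbb{N}:\mathcal{E}\text{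 is }(\delta,L)\text{-coverable}\}$. $\phi$ is $(\epsilon,\delta,L)$-private if (1) accuracy: $\mathbb{P}(|\hat{x}(x,Y)-x|\leq\epsilon/2)=1$ for all $x\in[0,1)$, where $\hat{x}(x,Y)$ is the learner's estimate when $v^*=x$; and (2) privacy: $C_\delta(\mathcal{I}(\overline{q}))\geq L$ for every $x\in[0,1)$ and every $\overline{q}\in\mathcal{Q}(x)$. An adversary estimator $\hat{x}^a$ is a random variable whose value is determined by the observed query sequence $\overline{q}$ together with an independent randomization. It is $(\delta,L)$-correct with respect to $\overline{q}\in\mathcal{Q}$ if $\mathbb{P}(|\hat{x}^a(\overline{q})-x|\leq\delta/2)>1/L$ for all $x\in\mathcal{I}(\overline{q})$ (probability over the estimator's randomization). $\phi$ is $(\epsilon,\delta,L)$-secure if it satisfies the same accuracy constraint (1) and, for every $\overline{q}\in\mathcal{Q}$, there is no adversary estimator that is $(\delta,L)$-correct with respect to $\overline{q}$; i.e., for every $\overline{q}\in\mathcal{Q}$ and every adversary estimator there exists $x\in\mathcal{I}(\overline{q})$ with $\mathbb{P}(|\hat{x}^a(\overline{q})-x|\leq\delta/2)\leq 1/L$. *)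

theory Defs
  imports "HOL-Probability.Probability"
begin

text \<open>The seed Y is uniform on {1..nseeds}.
  The k-th query is  qry [r_1,...,r_(k-1)] Y  (the number of responses given so far
  determines k), and the estimate is  est [r_1,...,r_N] Y.\<close>

record strategy =
  nseeds :: nat
  qry :: "bool list \<Rightarrow> nat \<Rightarrow> real"
  est :: "bool list \<Rightarrow> nat \<Rightarrow> real"

definition seeds :: "strategy \<Rightarrow> nat set" where
  "seeds \<phi> = {1..nseeds \<phi>}"

definition Phi :: "nat \<Rightarrow> strategy set" where
  "Phi N = {\<phi>. nseeds \<phi> \<ge> 1 \<and>
     (\<forall>rs y. length rs < N \<longrightarrow> y \<in> seeds \<phi> \<longrightarrow> qry \<phi> rs y \<in> {0..<1})}"

fun responses :: "strategy \<Rightarrow> real \<Rightarrow> nat \<Rightarrow> nat \<Rightarrow> bool list" where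
  "responses \<phi> x y 0 = []"
| "responses \<phi> x y (Suc k) =
     (let rs = responses \<phi> x y k in rs @ [x \<ge> qry \<phi> rs y])"

definition query_seq :: "strategy \<Rightarrow> nat \<Rightarrow> real \<Rightarrow> nat \<Rightarrow> real list" where
  "query_seq \<phi> N x y = map (\<lambda>k. qry \<phi> (responses \<phi> x y k) y) [0..<N]"

definition estimate :: "strategy \<Rightarrow> nat \<Rightarrow> real \<Rightarrow> nat \<Rightarrow> real" where
  "estimate \<phi> N x y = est \<phi> (responses \<phi> x y N) y"

text \<open>Q(x): query sequences occurring with positive probability (uniform seed).\<close>
definition Qx :: "strategy \<Rightarrow> nat \<Rightarrow> real \<Rightarrow> real list set" where
  "Qx \<phi> N x = {qs. \<exists>y \<in> seeds \<phi>. query_seq \<phi> N x y = qs}"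

definition Qall :: "strategy \<Rightarrow> nat \<Rightarrow> real list set" where
  "Qall \<phi> N = (\<Union>x \<in> {0..<1}. Qx \<phi> N x)"

definition info_set :: "strategy \<Rightarrow> nat \<Rightarrow> real list \<Rightarrow> real set" where
  "info_set \<phi> N qs = {x \<in> {0..<1}. qs \<in> Qx \<phi> N x}"

definition coverable :: "real \<Rightarrow> nat \<Rightarrow> real set \<Rightarrow> bool" where
  "coverable \<delta> L E \<longleftrightarrow> (\<exists>a b :: nat \<Rightarrow> real.
     (\<forall>j < L. b j - a j \<le> \<delta>) \<and> E \<subseteq> (\<Union>j < L. {a j..b j}))"

definition cover_number :: "real \<Rightarrow> real set \<Rightarrow> nat" where
  "cover_number \<delta> E = (LEAST L. coverable \<delta> L E)"

definition accurate :: "real \<Rightarrow> nat \<Rightarrow> strategy \<Rightarrow> bool" where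
  "accurate \<epsilon> N \<phi> \<longleftrightarrow>
     (\<forall>x \<in> {0..<1}. \<forall>y \<in> seeds \<phi>. \<bar>estimate \<phi> N x y - x\<bar> \<le> \<epsilon> / 2)"

definition learner_private :: "real \<Rightarrow> real \<Rightarrow> nat \<Rightarrow> nat \<Rightarrow> strategy \<Rightarrow> bool" where
  "learner_private \<epsilon> \<delta> L N \<phi> \<longleftrightarrow> accurate \<epsilon> N \<phi> \<and>
     (\<forall>x \<in> {0..<1}. \<forall>qs \<in> Qx \<phi> N x. cover_number \<delta> (info_set \<phi> N qs) \<ge> L)"

text \<open>An adversary estimator for a fixed observed query sequence is a real-valued
  random variable; it is represented by its distribution, an arbitrary Borel
  probability measure M on the reals.\<close>
definition adversary_correct :: "real \<Rightarrow> nat \<Rightarrow> real set \<Rightarrow> real measure \<Rightarrow> bool" where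
  "adversary_correct \<delta> L I M \<longleftrightarrow>
     (\<forall>x \<in> I. measure M {x - \<delta>/2 .. x + \<delta>/2} > 1 / real L)"

definition learner_secure :: "real \<Rightarrow> real \<Rightarrow> nat \<Rightarrow> nat \<Rightarrow> strategy \<Rightarrow> bool" where
  "learner_secure \<epsilon> \<delta> L N \<phi> \<longleftrightarrow> accurate \<epsilon> N \<phi> \<and>
     (\<forall>qs \<in> Qall \<phi> N. \<forall>M :: real measure.
        prob_space M \<longrightarrow> sets M = sets borel \<longrightarrow>
        \<not> adversary_correct \<delta> L (info_set \<phi> N qs) M)"

end

theory Submission
  imports Defs
begin

lemma chain_points:
  fixes \<delta> :: real
  assumes "\<delta> > 0"
  shows "\<And>I. I \<subseteq> {0..} \<Longrightarrow> \<not> coverable \<delta> n I \<Longrightarrow>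
    \<exists>x. (\<forall>i\<le>n. x i \<in> I) \<and> (\<forall>i<n. x i + \<delta> < x (Suc i))"
proof (induction n)
  case 0
  then have "I \<noteq> {}" unfolding coverable_def by auto
  then obtain y where "y \<in> I" by auto
  then show ?case by (intro exI[of _ "\<lambda>_. y"]) auto
next
  case (Suc n)
  have ne: "I \<noteq> {}"
  proof
    assume "I = {}"
    then have "coverable \<delta> (Suc n) I" unfolding coverable_def
      by (intro exI[of _ "\<lambda>_. 0"]) (auto simp: assms less_imp_le)
    then show False using Suc.prems(2) by simp
  qed
  have bdd: "bdd_below I" using Suc.prems(1) by (auto intro: bdd_belowI[of _ 0])
  define a where "a = Inf I"
  define I' where "I' = I \<inter> {a + \<delta><..}"
  have nc: "\<not> coverable \<delta> n I'"
  proof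
    assume "coverable \<delta> n I'"
    then obtain a0 b0 :: "nat \<Rightarrow> real" where h: "\<forall>j<n. b0 j - a0 j \<le> \<delta>" "I' \<subseteq> (\<Union>j<n. {a0 j..b0 j})"
      unfolding coverable_def by blast
    have "coverable \<delta> (Suc n) I"
      unfolding coverable_def
    proof (rule exI[of _ "\<lambda>j. if j < n then a0 j else a"], rule exI[of _ "\<lambda>j. if j < n then b0 j else a + \<delta>"], rule conjI)
      show "\<forall>j<Suc n. (if j < n then b0 j else a + \<delta>) - (if j < n then a0 j else a) \<le> \<delta>"
        using h(1) by auto
      show "I \<subseteq> (\<Union>j<Suc n. {(if j < n then a0 j else a)..(if j < n then b0 j else a + \<delta>)})"
      proof
        fix z assume z: "z \<in> I"
        have az: "a \<le> z" unfolding a_def using z bdd by (simp add: cInf_lower)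
        show "z \<in> (\<Union>j<Suc n. {(if j < n then a0 j else a)..(if j < n then b0 j else a + \<delta>)})"
        proof (cases "z \<le> a + \<delta>")
          case True
          then show ?thesis using az by (intro UN_I[of n]) auto
        next
          case False
          then have "z \<in> I'" using z unfolding I'_def by auto
          then obtain j where "j < n" "z \<in> {a0 j..b0 j}" using h(2) by blast
          then show ?thesis by (intro UN_I[of j]) auto
        qed
      qed
    qed
    then show False using Suc.prems(2) by simp
  qed
  have "I' \<subseteq> {0..}" using Suc.prems(1) unfolding I'_def by auto
  from Suc.IH[OF this nc] obtain x where x: "\<forall>i\<le>n. x i \<in> I'" "\<forall>i<n. x i + \<delta> < x (Suc i)" by blast
  have "x 0 \<in> I'" using x(1) by auto
  then have "a < x 0 - \<delta>" unfolding I'_def by auto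
  then obtain y where y: "y \<in> I" "y < x 0 - \<delta>" unfolding a_def using ne cInf_less_iff[OF ne bdd] by blast
  define x' where "x' = (\<lambda>i. if i = 0 then y else x (i - 1))"
  show ?case
  proof (intro exI[of _ x'] conjI allI impI)
    fix i assume "i \<le> Suc n"
    then show "x' i \<in> I" using x(1) y(1) unfolding x'_def I'_def by auto
  next
    fix i assume "i < Suc n"
    then show "x' i + \<delta> < x' (Suc i)" using x(2) y(2) unfolding x'_def
      by (cases i) auto
  qed
qed

lemma chain_mono:
  fixes x :: "nat \<Rightarrow> real"
  assumes "\<forall>i<n. x i + \<delta> < x (Suc i)" "\<delta> > 0"
  shows "i < j \<Longrightarrow> j \<le> n \<Longrightarrow> x i + \<delta> < x j"
proof (induction j)
  case 0 then show ?case by simp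
next
  case (Suc j)
  then show ?case
  proof (cases "i = j")
    case True then show ?thesis using assms Suc.prems by auto
  next
    case False
    then have "x i + \<delta> < x j" using Suc by auto
    moreover have "x j + \<delta> < x (Suc j)" using assms Suc.prems by auto
    ultimately show ?thesis using assms(2) by linarith
  qed
qed

lemma win_disj:
  fixes a b d :: real
  assumes "a + d < b"
  shows "{a - d / 2 .. a + d / 2} \<inter> {b - d / 2 .. b + d / 2} = {}"
  using assms by auto

theorem proposition2:
  fixes \<delta> \<epsilon> :: real and L N :: nat and \<phi> :: strategy
  assumes "\<delta> > 0" and "\<epsilon> > 0" and "L \<ge> 2" and "\<phi> \<in> Phi N"
  shows "learner_secure \<epsilon> \<delta> L N \<phi> \<longleftrightarrow> learner_private \<epsilon> \<delta> L N \<phi>"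
proof
  assume sec: "learner_secure \<epsilon> \<delta> L N \<phi>"
  show "learner_private \<epsilon> \<delta> L N \<phi>"
    unfolding learner_private_def
  proof (intro conjI ballI)
    show "accurate \<epsilon> N \<phi>" using sec unfolding learner_secure_def by simp
  next
    fix x qs assume x: "x \<in> {0..<1}" and qs: "qs \<in> Qx \<phi> N x"
    let ?I = "info_set \<phi> N qs"
    have qa: "qs \<in> Qall \<phi> N" using x qs unfolding Qall_def by blast
    show "cover_number \<delta> ?I \<ge> L"
    proof (rule ccontr)
      assume "\<not> L \<le> cover_number \<delta> ?I"
      then have lt: "cover_number \<delta> ?I < L" by simp
      have "x \<in> ?I" using x qs unfolding info_set_def by auto
      have cex: "coverable \<delta> (nat \<lceil>1/\<delta>\<rceil>) ?I"
      proof -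
        have h1: "\<forall>j<nat \<lceil>1 / \<delta>\<rceil>. real j * \<delta> + \<delta> - real j * \<delta> \<le> \<delta>" by simp
        have h2: "?I \<subseteq> (\<Union>j<nat \<lceil>1 / \<delta>\<rceil>. {real j * \<delta>..real j * \<delta> + \<delta>})"
        proof
          fix z assume "z \<in> ?I"
          then have z: "0 \<le> z" "z < 1" unfolding info_set_def by auto
          define j where "j = nat \<lfloor>z / \<delta>\<rfloor>"
          have f0: "0 \<le> \<lfloor>z / \<delta>\<rfloor>" using z assms(1) by simp
          have rj: "real j = of_int \<lfloor>z / \<delta>\<rfloor>" unfolding j_def using f0 by simp
          have "real j \<le> z / \<delta>" "z / \<delta> < real j + 1" using rj by linarith+
          then have A: "real j * \<delta> \<le> z" "z < real j * \<delta> + \<delta>" using assms(1)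
            by (simp_all add: field_simps)
          have "z / \<delta> < 1 / \<delta>" using z assms(1) by (simp add: divide_strict_right_mono)
          then have "\<lfloor>z / \<delta>\<rfloor> < \<lceil>1 / \<delta>\<rceil>" by linarith
          then have "j < nat \<lceil>1 / \<delta>\<rceil>" unfolding j_def using f0 by linarith
          then show "z \<in> (\<Union>j<nat \<lceil>1 / \<delta>\<rceil>. {real j * \<delta>..real j * \<delta> + \<delta>})" using A by auto
        qed
        show ?thesis unfolding coverable_def
          by (rule exI[of _ "\<lambda>j. real j * \<delta>"], rule exI[of _ "\<lambda>j. real j * \<delta> + \<delta>"]) (use h1 h2 in simp)
      qed
      define m where "m = cover_number \<delta> ?I"
      have cm: "coverable \<delta> m ?I" unfolding m_def cover_number_def using cex by (rule LeastI)
      then obtain a b :: "nat \<Rightarrow> real" where ab: "\<forall>j<m. b j - a j \<le> \<delta>" "?I \<subseteq> (\<Union>j<m. {a j..b j})"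
        unfolding coverable_def by blast
      have mL: "m < L" using lt m_def by simp
      define S where "S = (\<lambda>j. (a j + b j) / 2) ` {..<m}"
      have Sne: "S \<noteq> {}" using \<open>x \<in> ?I\<close> ab(2) unfolding S_def by auto
      have Sfin: "finite S" unfolding S_def by simp
      have cS: "card S \<le> m" unfolding S_def using card_image_le by (metis card_lessThan finite_lessThan)
      have cS0: "card S > 0" using Sne Sfin by (simp add: card_gt_0_iff)
      define M where "M = distr (measure_pmf (pmf_of_set S)) borel (\<lambda>z. z)"
      have meas: "(\<lambda>z. z) \<in> measurable (measure_pmf (pmf_of_set S)) borel" by simp
      have "prob_space M" unfolding M_def
        by (rule prob_space.prob_space_distr[OF measure_pmf.prob_space_axioms meas])
      moreover have "sets M = sets borel" unfolding M_def by simp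
      moreover have "adversary_correct \<delta> L ?I M"
        unfolding adversary_correct_def
      proof
        fix z assume "z \<in> ?I"
        then obtain j where j: "j < m" "z \<in> {a j..b j}" using ab(2) by blast
        let ?W = "{z - \<delta> / 2..z + \<delta> / 2}"
        have "(a j + b j) / 2 \<in> S \<inter> ?W" using j ab(1) unfolding S_def by auto
        then have c1: "card (S \<inter> ?W) \<ge> 1" using Sfin
          by (metis One_nat_def Suc_leI card_gt_0_iff empty_iff finite_Int)
        have "measure M ?W = card (S \<inter> ?W) / card S"
          unfolding M_def using measure_distr[OF meas, of ?W] measure_pmf_of_set[OF Sne Sfin, of ?W]
          by simp
        also have "\<dots> \<ge> 1 / card S" using c1 cS0 by (simp add: divide_right_mono)
        finally have "measure M ?W \<ge> 1 / card S" .
        moreover have "1 / real L < 1 / card S" using cS mL cS0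
          by (simp add: frac_less2)
        ultimately show "measure M ?W > 1 / real L" by linarith
      qed
      ultimately show False using sec qa unfolding learner_secure_def by blast
    qed
  qed
next
  assume priv: "learner_private \<epsilon> \<delta> L N \<phi>"
  show "learner_secure \<epsilon> \<delta> L N \<phi>"
    unfolding learner_secure_def
  proof (intro conjI ballI allI impI notI)
    show "accurate \<epsilon> N \<phi>" using priv unfolding learner_private_def by simp
  next
    fix qs and M :: "real measure"
    assume qa: "qs \<in> Qall \<phi> N" and ps: "prob_space M" and sM: "sets M = sets borel"
      and ac: "adversary_correct \<delta> L (info_set \<phi> N qs) M"
    let ?I = "info_set \<phi> N qs"
    obtain x0 where x0: "x0 \<in> {0..<1}" "qs \<in> Qx \<phi> N x0" using qa unfolding Qall_def by blast
    have cn: "cover_number \<delta> ?I \<ge> L" using priv x0 unfolding learner_private_def by blast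
    define n where "n = L - 1"
    have Ln: "L = Suc n" using assms(3) n_def by simp
    have nc: "\<not> coverable \<delta> n ?I"
    proof
      assume "coverable \<delta> n ?I"
      then have "cover_number \<delta> ?I \<le> n" unfolding cover_number_def by (rule Least_le)
      then show False using cn Ln by simp
    qed
    have sub: "?I \<subseteq> {0..}" unfolding info_set_def by auto
    obtain x where x: "\<forall>i\<le>n. x i \<in> ?I" "\<forall>i<n. x i + \<delta> < x (Suc i)"
      using chain_points[OF assms(1) sub nc] by blast
    define W where "W = (\<lambda>i. {x i - \<delta> / 2 .. x i + \<delta> / 2})"
    interpret P: prob_space M by (rule ps)
    have Wm: "W ` {..n} \<subseteq> sets M" by (rule image_subsetI) (simp add: sM W_def)
    have disj: "disjoint_family_on W {..n}"
      unfolding disjoint_family_on_def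
    proof (intro ballI impI)
      fix i j assume ij: "i \<in> {..n}" "j \<in> {..n}" "i \<noteq> j"
      show "W i \<inter> W j = {}"
      proof (cases "i < j")
        case True
        then have "x i + \<delta> < x j" using chain_mono[OF x(2) assms(1)] ij by simp
        then show ?thesis unfolding W_def using win_disj by (simp add: Int_commute)
      next
        case False
        then have "j < i" using ij by simp
        then have "x j + \<delta> < x i" using chain_mono[OF x(2) assms(1)] ij by simp
        then show ?thesis unfolding W_def using win_disj by (simp add: Int_commute)
      qed
    qed
    have e1: "measure M (\<Union>i\<in>{..n}. W i) = (\<Sum>i\<in>{..n}. measure M (W i))"
      by (rule P.finite_measure_finite_Union[OF _ Wm disj]) simp
    have e2: "(\<Sum>i\<in>{..n}. 1 / real L) < (\<Sum>i\<in>{..n}. measure M (W i))"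
    proof (rule sum_strict_mono)
      fix i assume "i \<in> {..n}"
      then show "1 / real L < measure M (W i)"
      proof -
        have "x i \<in> ?I" using x(1) \<open>i \<in> {..n}\<close> by simp
        then show ?thesis using ac unfolding adversary_correct_def W_def by blast
      qed
    qed simp_all
    have e3: "(\<Sum>i\<in>{..n}. 1 / real L) = 1" using Ln by simp
    have "measure M (\<Union>i\<in>{..n}. W i) > 1" using e1 e2 e3 by linarith
    moreover have "measure M (\<Union>i\<in>{..n}. W i) \<le> 1" by (rule P.prob_le_1)
    ultimately show False by simp
  qed
qed

end
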